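(* Let $\mathcal S$ be a chain-vanishing collection of nonempty subsets of a set $X$, and let $A,B\in\mathcal S$ with $A\perp B$. Then there is $C\in[A]_{\mathcal S}$ with $C\supseteq B$.
   Context: Fix a nonempty set $X$; $A^c:=X\setminus A$. $A\perp B$ means $A\cap B=\emptyset$ and $A\ne B^c$. For $A,B\in\mathcal S$, $B$ is $\mathcal S$-maximally orthogonal to $A$ if $B\perp A$ and no $C\in\mathcal S$ satisfies $C\perp A$, $C\supsetneq B$; $[A]_{\mathcal S}:=\{A\}\cup\{B\in\mathcal S:B$ is $\mathcal S$-maximally orthogonal to $A\}$. A chain is a sequence $(A_n)_{n\in\mathbb N}$ that is strictly increasing or strictly decreasing under inclusion; a decreasing (resp. increasing) chain is $\mathcal S$-vanishing if no $B\in\mathcal S$ satisfies $B\subseteq A_n$ (resp. $B\cap A_n=\emptyset$) for all $n$; $\mathcal S$ is chain-vanishing if every chain of members of $\mathcal S$ is $\mathcal S$-vanishing. *)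

theory Defs
  imports Main
begin

definition orth :: "'a set \<Rightarrow> 'a set \<Rightarrow> 'a set \<Rightarrow> bool" where
  "orth X A B \<longleftrightarrow> A \<inter> B = {} \<and> A \<noteq> X - B"

definition max_orth :: "'a set \<Rightarrow> 'a set set \<Rightarrow> 'a set \<Rightarrow> 'a set \<Rightarrow> bool" where
  "max_orth X S A B \<longleftrightarrow> B \<in> S \<and> orth X B A \<and>
     \<not> (\<exists>C\<in>S. orth X C A \<and> B \<subset> C)"

definition orth_class :: "'a set \<Rightarrow> 'a set set \<Rightarrow> 'a set \<Rightarrow> 'a set set" where
  "orth_class X S A = {A} \<union> {B \<in> S. max_orth X S A B}"

definition incr_chain :: "(nat \<Rightarrow> 'a set) \<Rightarrow> bool" where
  "incr_chain F \<longleftrightarrow> (\<forall>n. F n \<subset> F (Suc n))"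

definition decr_chain :: "(nat \<Rightarrow> 'a set) \<Rightarrow> bool" where
  "decr_chain F \<longleftrightarrow> (\<forall>n. F (Suc n) \<subset> F n)"

definition chain_vanishing :: "'a set set \<Rightarrow> bool" where
  "chain_vanishing S \<longleftrightarrow>
     (\<forall>F. (\<forall>n. F n \<in> S) \<longrightarrow>
        (decr_chain F \<longrightarrow> \<not> (\<exists>B\<in>S. \<forall>n. B \<subseteq> F n)) \<and>
        (incr_chain F \<longrightarrow> \<not> (\<exists>B\<in>S. \<forall>n. B \<inter> F n = {})))"

end

theory Submission
  imports Defs
begin

theorem mainTheorem11:
  fixes X :: "'a set" and S :: "'a set set" and A B :: "'a set"
  assumes "X \<noteq> {}"
    and "\<forall>D\<in>S. D \<noteq> {} \<and> D \<subseteq> X"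
    and "chain_vanishing S"
    and "A \<in> S" and "B \<in> S" and "orth X A B"
  shows "\<exists>C\<in>orth_class X S A. B \<subseteq> C"
proof (rule ccontr)
  assume nc: "\<not> ?thesis"
  define P where "P C \<longleftrightarrow> C \<in> S \<and> orth X C A \<and> B \<subseteq> C" for C
  have AX: "A \<subseteq> X" "B \<subseteq> X" using assms(2,4,5) by auto
  have PB: "P B" using assms(5,6) AX unfolding P_def orth_def by auto
  have step: "\<exists>D. D \<in> S \<and> orth X D A \<and> C \<subset> D" if "P C" for C
  proof (rule ccontr)
    assume "\<nexists>D. D \<in> S \<and> orth X D A \<and> C \<subset> D"
    then have "max_orth X S A C" using that unfolding P_def max_orth_def by auto
    then have "C \<in> orth_class X S A" using that unfolding P_def orth_class_def by auto
    then show False using nc that unfolding P_def by auto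
  qed
  define F where "F = rec_nat B (\<lambda>_ C. SOME D. D \<in> S \<and> orth X D A \<and> C \<subset> D)"
  have FS: "F (Suc n) = (SOME D. D \<in> S \<and> orth X D A \<and> F n \<subset> D)" for n
    unfolding F_def by simp
  have PF: "P (F n) \<and> F n \<subset> F (Suc n)" for n
  proof (induction n)
    case 0
    have "F 0 = B" unfolding F_def by simp
    then show ?case using PB step[OF PB] someI_ex[OF step[OF PB]] FS[of 0] by auto
  next
    case (Suc n)
    have p: "P (F (Suc n))"
      using Suc someI_ex[OF step[of "F n"]] FS[of n] unfolding P_def by auto
    then show ?case using someI_ex[OF step[OF p]] FS[of "Suc n"] by auto
  qed
  have "incr_chain F" unfolding incr_chain_def using PF by auto
  moreover have "\<forall>n. F n \<in> S" using PF unfolding P_def by auto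
  moreover have "\<forall>n. A \<inter> F n = {}" using PF unfolding P_def orth_def by auto
  ultimately show False using assms(3,4) unfolding chain_vanishing_def by blast
qed

end
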